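(* In the reset-button collector, for all complex $z$ with $|z|\le1$, \[\mathbb Ez^{T_n}=\frac{(1-q_nz)\phi_n(q_nz)}{1-z+\rho_nz\phi_n(q_nz)}.\] The same identity also holds, with finite value, for any real $z\ge0$ such that $q_nz<1$ and $1-z+\rho_nz\phi_n(q_nz)>0$.
   Context: Reset-button collector: fix $n\ge1$. There are standard coupons $1,\dots,n$ and a reset coupon. At each discrete time $t=1,2,\dots$ one coupon is sampled independently: the reset coupon with probability $\rho_n\in(0,1)$, standard coupon $i$ with probability $p_{i,n}>0$, where $\sum_ip_{i,n}=q_n:=1-\rho_n$. Starting from the empty collection, drawn standard coupons are added; a reset empties the collection and collecting continues. $T_n$ is the first time all $n$ standard coupons are present. $C_n$ is the ordinary coupon collector completion time (number of i.i.d. draws until all types seen) with type probabilities $\pi_{i,n}=p_{i,n}/q_n$, and $\phi_n(z)=\mathbb Ez^{C_n}$. *)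

theory Defs
  imports "HOL-Analysis.Analysis"
begin

text \<open>Coupon labels: 0 is the reset coupon, 1..n are the standard coupons.
  A realisation of the first t draws (times 1..t) is a function on {..<t}
  (index j corresponds to time j+1).\<close>

definition reset_collected :: "(nat \<Rightarrow> nat) \<Rightarrow> nat \<Rightarrow> nat set" where
  "reset_collected \<omega> k =
     {\<omega> j | j. j < k \<and> \<omega> j \<noteq> 0 \<and> (\<forall>l. j < l \<and> l < k \<longrightarrow> \<omega> l \<noteq> 0)}"

definition reset_first_complete :: "nat \<Rightarrow> (nat \<Rightarrow> nat) \<Rightarrow> nat \<Rightarrow> bool" where
  "reset_first_complete n \<omega> t \<longleftrightarrow>
     {1..n} \<subseteq> reset_collected \<omega> t \<and> (\<forall>s<t. \<not> {1..n} \<subseteq> reset_collected \<omega> s)"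

definition T_prob :: "nat \<Rightarrow> real \<Rightarrow> (nat \<Rightarrow> real) \<Rightarrow> nat \<Rightarrow> real" where
  "T_prob n \<rho> p t =
     (\<Sum>\<omega> \<in> {..<t} \<rightarrow>\<^sub>E {0..n}.
        (\<Prod>i<t. (if \<omega> i = 0 then \<rho> else p (\<omega> i))) *
        (if reset_first_complete n \<omega> t then 1 else 0))"

definition C_prob :: "nat \<Rightarrow> (nat \<Rightarrow> real) \<Rightarrow> nat \<Rightarrow> real" where
  "C_prob n \<pi> t =
     (\<Sum>\<omega> \<in> {..<t} \<rightarrow>\<^sub>E {1..n}.
        (\<Prod>i<t. \<pi> (\<omega> i)) *
        (if {1..n} \<subseteq> \<omega> ` {..<t} \<and> (\<forall>s<t. \<not> {1..n} \<subseteq> \<omega> ` {..<s}) then 1 else 0))"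

definition C_pgf :: "nat \<Rightarrow> (nat \<Rightarrow> real) \<Rightarrow> 'a::{real_normed_field,banach} \<Rightarrow> 'a" where
  "C_pgf n \<pi> w = (\<Sum>t. of_real (C_prob n \<pi> t) * w ^ t)"

end

theory Submission
  imports Defs
begin


definition join :: "nat \<Rightarrow> (nat \<Rightarrow> 'a) \<Rightarrow> (nat \<Rightarrow> 'a) \<Rightarrow> nat \<Rightarrow> 'a" where
  "join a u v = (\<lambda>j. if j < a then u j else v (j - a))"

definition ncons :: "'a \<Rightarrow> (nat \<Rightarrow> 'a) \<Rightarrow> nat \<Rightarrow> 'a" where
  "ncons x v = (\<lambda>j. if j = 0 then x else v (j - 1))"

lemma sum_PiE_join:
  assumes "finite A"
  shows "(\<Sum>\<omega>\<in>{..<a+b} \<rightarrow>\<^sub>E A. f \<omega>) = (\<Sum>u\<in>{..<a} \<rightarrow>\<^sub>E A. \<Sum>v\<in>{..<b} \<rightarrow>\<^sub>E A. f (join a u v))"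
proof -
  have "(\<Sum>u\<in>{..<a} \<rightarrow>\<^sub>E A. \<Sum>v\<in>{..<b} \<rightarrow>\<^sub>E A. f (join a u v)) =
        (\<Sum>(u,v)\<in>({..<a} \<rightarrow>\<^sub>E A) \<times> ({..<b} \<rightarrow>\<^sub>E A). f (join a u v))"
    by (rule sum.cartesian_product)
  also have "\<dots> = (\<Sum>\<omega>\<in>{..<a+b} \<rightarrow>\<^sub>E A. f \<omega>)"
  proof (rule sum.reindex_bij_witness[of _ "\<lambda>\<omega>. (restrict \<omega> {..<a}, \<lambda>j. if j < b then \<omega> (j+a) else undefined)" "\<lambda>(u,v). join a u v"])
    fix w assume w: "w \<in> {..<a+b} \<rightarrow>\<^sub>E A"
    show "(case (restrict w {..<a}, \<lambda>j. if j < b then w (j+a) else undefined) of (u,v) \<Rightarrow> join a u v) = w"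
    proof -
      have "join a (restrict w {..<a}) (\<lambda>j. if j < b then w (j+a) else undefined) x = w x" for x
        using w by (cases "x < a"; cases "x < a + b") (auto simp: join_def PiE_def extensional_def)
      then show ?thesis by auto
    qed
    show "(restrict w {..<a}, \<lambda>j. if j < b then w (j+a) else undefined) \<in> ({..<a} \<rightarrow>\<^sub>E A) \<times> ({..<b} \<rightarrow>\<^sub>E A)"
      using w by (auto simp: PiE_def Pi_iff extensional_def)
  next
    fix uv assume uv: "uv \<in> ({..<a} \<rightarrow>\<^sub>E A) \<times> ({..<b} \<rightarrow>\<^sub>E A)"
    obtain u v where uv': "uv = (u,v)" by force
    have u: "u \<in> {..<a} \<rightarrow>\<^sub>E A" and v: "v \<in> {..<b} \<rightarrow>\<^sub>E A" using uv uv' by auto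
    have "restrict (join a u v) {..<a} = u"
      using u by (auto simp: join_def PiE_def extensional_def fun_eq_iff)
    moreover have "(\<lambda>j. if j < b then join a u v (j+a) else undefined) = v"
      using v by (auto simp: join_def PiE_def extensional_def fun_eq_iff)
    ultimately show "(restrict (case uv of (u,v) \<Rightarrow> join a u v) {..<a}, \<lambda>j. if j < b then (case uv of (u,v) \<Rightarrow> join a u v) (j+a) else undefined) = uv"
      unfolding uv' prod.case by simp
    have "join a u v \<in> {..<a+b} \<rightarrow>\<^sub>E A"
    proof (rule PiE_I)
      fix x assume "x \<in> {..<a+b}" then show "join a u v x \<in> A"
        using u v by (cases "x < a") (auto simp: join_def PiE_iff)
    next
      fix x assume "x \<notin> {..<a+b}" then show "join a u v x = undefined"
        using u v by (auto simp: join_def PiE_def extensional_def)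
    qed
    then show "(case uv of (u,v) \<Rightarrow> join a u v) \<in> {..<a+b} \<rightarrow>\<^sub>E A" using uv' by simp
    show "f (case uv of (u,v) \<Rightarrow> join a u v) = (case uv of (u,v) \<Rightarrow> f (join a u v))" using uv' by simp
  qed
  finally show ?thesis by simp
qed

lemma sum_PiE_snoc:
  assumes "finite A"
  shows "(\<Sum>\<omega>\<in>{..<Suc m} \<rightarrow>\<^sub>E A. f \<omega>) = (\<Sum>u\<in>{..<m} \<rightarrow>\<^sub>E A. \<Sum>x\<in>A. f (u(m := x)))"
proof -
  have "(\<Sum>u\<in>{..<m} \<rightarrow>\<^sub>E A. \<Sum>x\<in>A. f (u(m := x))) =
        (\<Sum>(u,x)\<in>({..<m} \<rightarrow>\<^sub>E A) \<times> A. f (u(m := x)))"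
    by (rule sum.cartesian_product)
  also have "\<dots> = (\<Sum>\<omega>\<in>{..<Suc m} \<rightarrow>\<^sub>E A. f \<omega>)"
    by (rule sum.reindex_bij_witness[of _ "\<lambda>w. (fun_upd w m undefined, w m)" "\<lambda>(u,x). fun_upd u m x"])
       (auto simp: PiE_def extensional_def fun_eq_iff split: if_splits)
  finally show ?thesis by simp
qed

lemma sum_PiE_cons:
  assumes "finite A"
  shows "(\<Sum>\<omega>\<in>{..<Suc m} \<rightarrow>\<^sub>E A. f \<omega>) = (\<Sum>x\<in>A. \<Sum>v\<in>{..<m} \<rightarrow>\<^sub>E A. f (ncons x v))"
proof -
  have "(\<Sum>x\<in>A. \<Sum>v\<in>{..<m} \<rightarrow>\<^sub>E A. f (ncons x v)) =
        (\<Sum>(x,v)\<in>A \<times> ({..<m} \<rightarrow>\<^sub>E A). f (ncons x v))"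
    by (rule sum.cartesian_product)
  also have "\<dots> = (\<Sum>\<omega>\<in>{..<Suc m} \<rightarrow>\<^sub>E A. f \<omega>)"
    by (rule sum.reindex_bij_witness[of _ "\<lambda>\<omega>. (\<omega> 0, \<lambda>j. if j < m then \<omega> (Suc j) else undefined)" "\<lambda>(x,v). ncons x v"])
       (auto simp: ncons_def PiE_def extensional_def fun_eq_iff split: if_splits)
  finally show ?thesis by simp
qed

lemma prod_lessThan_add: "(\<Prod>i<a+(b::nat). g i) = (\<Prod>i<a. g i) * (\<Prod>i<b. g (a+i))"
  by (induction b) (auto simp: mult_ac)

lemma coll_nozero:
  assumes "\<forall>j<s. \<omega> j \<noteq> 0" shows "reset_collected \<omega> s = \<omega> ` {..<s}"
  using assms unfolding reset_collected_def by auto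

lemma coll_after:
  assumes "\<omega> a = 0"
  shows "reset_collected \<omega> (a + 1 + s) = reset_collected (\<lambda>j. \<omega> (a + 1 + j)) s"
proof -
  have "reset_collected \<omega> (a + 1 + s) \<subseteq> reset_collected (\<lambda>j. \<omega> (a + 1 + j)) s"
  proof
    fix x assume "x \<in> reset_collected \<omega> (a + 1 + s)"
    then obtain j where j: "x = \<omega> j" "j < a+1+s" "\<omega> j \<noteq> 0" "\<forall>l. j < l \<and> l < a+1+s \<longrightarrow> \<omega> l \<noteq> 0"
      unfolding reset_collected_def by blast
    have "j > a"
    proof (rule ccontr)
      assume "\<not> a < j"
      then have "j < a \<or> j = a" by auto
      then show False using j assms by (metis add_less_cancel_left less_add_one trans_less_add1)
    qed
    then obtain j' where "j = a + 1 + j'" by (metis Suc_eq_plus1 add_Suc less_iff_Suc_add)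
    then show "x \<in> reset_collected (\<lambda>j. \<omega> (a + 1 + j)) s"
      using j unfolding reset_collected_def
      by (auto intro!: exI[of _ j'])
  qed
  moreover have "reset_collected (\<lambda>j. \<omega> (a + 1 + j)) s \<subseteq> reset_collected \<omega> (a + 1 + s)"
  proof
    fix x assume "x \<in> reset_collected (\<lambda>j. \<omega> (a + 1 + j)) s"
    then obtain j where j: "x = \<omega> (a+1+j)" "j < s" "\<omega> (a+1+j) \<noteq> 0" "\<forall>l. j < l \<and> l < s \<longrightarrow> \<omega> (a+1+l) \<noteq> 0"
      unfolding reset_collected_def by blast
    have "\<forall>l. a+1+j < l \<and> l < a+1+s \<longrightarrow> \<omega> l \<noteq> 0"
    proof (intro allI impI)
      fix l
      define l' where "l' = l - (a+1)"
      assume "a+1+j < l \<and> l < a+1+s"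
      then have "l = a+1+l'" "j < l'" "l' < s" unfolding l'_def by auto
      then show "\<omega> l \<noteq> 0" using j by auto
    qed
    then show "x \<in> reset_collected \<omega> (a + 1 + s)"
      using j unfolding reset_collected_def by (auto intro!: exI[of _ "a+1+j"])
  qed
  ultimately show ?thesis by blast
qed



definition fcC :: "nat \<Rightarrow> (nat \<Rightarrow> nat) \<Rightarrow> nat \<Rightarrow> bool" where
  "fcC n \<omega> t \<longleftrightarrow> {1..n} \<subseteq> \<omega> ` {..<t} \<and> (\<forall>s<t. \<not> {1..n} \<subseteq> \<omega> ` {..<s})"

definition sC :: "nat \<Rightarrow> (nat \<Rightarrow> real) \<Rightarrow> nat \<Rightarrow> real" where
  "sC n p t = (\<Sum>\<omega>\<in>{..<t} \<rightarrow>\<^sub>E {1..n}. (\<Prod>i<t. p (\<omega> i)) * (if fcC n \<omega> t then 1 else 0))"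

definition gC :: "nat \<Rightarrow> (nat \<Rightarrow> real) \<Rightarrow> nat \<Rightarrow> real" where
  "gC n p m = (\<Sum>\<omega>\<in>{..<m} \<rightarrow>\<^sub>E {1..n}. (\<Prod>i<m. p (\<omega> i)) * (if {1..n} \<subseteq> \<omega> ` {..<m} then 0 else 1))"

lemma sum_prod_PiE_pow:
  "(\<Sum>\<omega>\<in>{..<m} \<rightarrow>\<^sub>E A. (\<Prod>i<m. (f (\<omega> i)::real))) = (\<Sum>x\<in>A. f x) ^ m" if "finite A"
  using prod_sum_PiE[of "{..<m}" "\<lambda>_. A" "\<lambda>_ x. f x"] that by simp

lemma indicator_first_zero:
  fixes \<omega> :: "nat \<Rightarrow> nat"
  shows "(if \<forall>j<t. \<omega> j \<noteq> 0 then 1 else 0) +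
         (\<Sum>k\<in>{1..t}. (if \<omega> (k-1) = 0 \<and> (\<forall>j<k-1. \<omega> j \<noteq> 0) then 1 else 0)) = (1::real)"
proof (cases "\<forall>j<t. \<omega> j \<noteq> 0")
  case True
  then have "\<And>k. k \<in> {1..t} \<Longrightarrow> \<not> (\<omega> (k-1) = 0 \<and> (\<forall>j<k-1. \<omega> j \<noteq> 0))" by auto
  then have "(\<Sum>k\<in>{1..t}. (if \<omega> (k-1) = 0 \<and> (\<forall>j<k-1. \<omega> j \<noteq> 0) then 1 else 0)) = (0::real)"
    by (intro sum.neutral) auto
  then show ?thesis using True by simp
next
  case False
  then obtain j where j: "j < t" "\<omega> j = 0" by auto
  define j0 where "j0 = (LEAST j. \<omega> j = 0)"
  have j0: "\<omega> j0 = 0" unfolding j0_def using j(2) by (rule LeastI)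
  have j0le: "j0 \<le> j" unfolding j0_def using j(2) by (rule Least_le)
  have j0min: "\<And>i. i < j0 \<Longrightarrow> \<omega> i \<noteq> 0" unfolding j0_def using not_less_Least by blast
  have eq: "(\<omega> (k-1) = 0 \<and> (\<forall>i<k-1. \<omega> i \<noteq> 0)) \<longleftrightarrow> k = Suc j0" if "k \<in> {1..t}" for k
  proof
    assume h: "\<omega> (k-1) = 0 \<and> (\<forall>i<k-1. \<omega> i \<noteq> 0)"
    then have "\<not> j0 < k - 1" using j0 by auto
    moreover have "\<not> k - 1 < j0" using h j0min by blast
    ultimately have "k - 1 = j0" by linarith
    then show "k = Suc j0" using that by arith
  next
    assume "k = Suc j0"
    then show "\<omega> (k-1) = 0 \<and> (\<forall>i<k-1. \<omega> i \<noteq> 0)" using j0 j0min by simp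
  qed
  have "(\<Sum>k\<in>{1..t}. (if \<omega> (k-1) = 0 \<and> (\<forall>j<k-1. \<omega> j \<noteq> 0) then 1 else 0)) =
        (\<Sum>k\<in>{1..t}. (if k = Suc j0 then 1 else (0::real)))"
    by (rule sum.cong[OF refl]) (simp only: eq)
  also have "\<dots> = 1"
  proof -
    have "Suc j0 \<in> {1..t}" using j j0le by simp
    then show ?thesis by (simp only: sum.delta[OF finite_atLeastAtMost]) simp
  qed
  finally show ?thesis using False by simp
qed

context
  fixes n :: nat and \<rho> :: real and p :: "nat \<Rightarrow> real"
  assumes n1: "n \<ge> 1" and rpos: "0 < \<rho>" and ppos: "\<forall>i\<in>{1..n}. p i > 0"
begin

lemma part0:
  "(\<Sum>\<omega>\<in>{..<t} \<rightarrow>\<^sub>E {0..n}. ((\<Prod>i<t. (if \<omega> i = 0 then \<rho> else p (\<omega> i))) *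
        (if reset_first_complete n \<omega> t then 1 else 0)) * (if \<forall>j<t. \<omega> j \<noteq> 0 then 1 else 0))
   = sC n p t"
proof -
  define F where "F \<omega> = ((\<Prod>i<t. (if \<omega> i = 0 then \<rho> else p (\<omega> i))) *
        (if reset_first_complete n \<omega> t then 1 else 0)) * (if \<forall>j<t. \<omega> j \<noteq> (0::nat) then 1 else (0::real))" for \<omega>
  have sub: "{..<t} \<rightarrow>\<^sub>E {1..n} \<subseteq> {..<t} \<rightarrow>\<^sub>E {0..n}" by (rule PiE_mono) auto
  have z: "F w = 0" if "w \<in> ({..<t} \<rightarrow>\<^sub>E {0..n}) - ({..<t} \<rightarrow>\<^sub>E {1..n})" for w
  proof -
    from that have a: "w \<in> {..<t} \<rightarrow>\<^sub>E {0..n}" and b: "w \<notin> ({..<t} \<rightarrow>\<^sub>E {1..n})" by auto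
    from b a obtain j where "j < t" "w j \<notin> {1..n}" unfolding PiE_iff by auto
    moreover have "w j \<in> {0..n}" using a \<open>j < t\<close> unfolding PiE_iff by auto
    ultimately have "\<not> (\<forall>j<t. w j \<noteq> 0)" by auto
    then have "(if \<forall>j<t. w j \<noteq> 0 then 1 else 0) = (0::real)" by (rule if_not_P)
    then show ?thesis unfolding F_def by simp
  qed
  have "sum F ({..<t} \<rightarrow>\<^sub>E {0..n}) = sum F ({..<t} \<rightarrow>\<^sub>E {1..n})"
    by (rule sum.mono_neutral_right[OF _ sub]) (use z in \<open>auto intro: finite_PiE\<close>)
  also have "\<dots> = sC n p t" unfolding sC_def
  proof (rule sum.cong[OF refl])
    fix w assume w: "w \<in> {..<t} \<rightarrow>\<^sub>E {1..n}"
    then have nz: "\<forall>j<t. w j \<noteq> 0" unfolding PiE_iff by force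
    have pr: "(\<Prod>i<t. (if w i = 0 then \<rho> else p (w i))) = (\<Prod>i<t. p (w i))"
      using nz by (intro prod.cong) auto
    have rf: "reset_first_complete n w t \<longleftrightarrow> fcC n w t"
    proof -
      have c: "reset_collected w s = w ` {..<s}" if "s \<le> t" for s
        using that nz by (intro coll_nozero) auto
      have c2: "(\<forall>s<t. \<not> {1..n} \<subseteq> reset_collected w s) \<longleftrightarrow> (\<forall>s<t. \<not> {1..n} \<subseteq> w ` {..<s})"
      proof -
        have "\<forall>s<t. reset_collected w s = w ` {..<s}" using c by simp
        then show ?thesis by simp
      qed
      show ?thesis unfolding reset_first_complete_def fcC_def c2 using c[of t] by simp
    qed
    have "(if \<forall>j<t. w j \<noteq> 0 then 1 else 0) = (1::real)" using nz by (rule if_P)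
    then show "F w = (\<Prod>i<t. p (w i)) * (if fcC n w t then 1 else 0)"
      unfolding F_def pr rf by simp
  qed
  finally show ?thesis unfolding F_def .
qed

lemma join_ncons_simps:
  "j < a \<Longrightarrow> join a u (ncons x y) j = u j"
  "join a u (ncons x y) a = x"
  "join a u (ncons x y) (a + 1 + j) = y j"
  "(\<lambda>j. join a u (ncons x y) (a + 1 + j)) = y"
  by (auto simp: join_def ncons_def)

lemma rfc_join:
  assumes nz: "\<forall>j<a. u j \<noteq> 0"
  shows "reset_first_complete n (join a u (ncons 0 y)) (a + Suc m) \<longleftrightarrow>
         \<not> {1..n} \<subseteq> u ` {..<a} \<and> reset_first_complete n y m"
proof -
  define w where "w = join a u (ncons 0 y)"
  have c1: "reset_collected w s = u ` {..<s}" if "s \<le> a" for s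
  proof -
    have "reset_collected w s = w ` {..<s}"
      using that nz by (intro coll_nozero) (auto simp: w_def join_ncons_simps)
    also have "\<dots> = u ` {..<s}" using that by (intro image_cong) (auto simp: w_def join_ncons_simps)
    finally show ?thesis .
  qed
  have c2: "reset_collected w (Suc (a + s')) = reset_collected y s'" for s'
  proof -
    have "reset_collected w (a + 1 + s') = reset_collected (\<lambda>j. w (a + 1 + j)) s'"
      by (rule coll_after) (simp add: w_def join_ncons_simps)
    moreover have "(\<lambda>j. w (a + 1 + j)) = y" unfolding w_def by (rule join_ncons_simps(4))
    ultimately show ?thesis by simp
  qed
  have all: "(\<forall>s<a + Suc m. \<not> {1..n} \<subseteq> reset_collected w s) \<longleftrightarrow>
        (\<forall>s\<le>a. \<not> {1..n} \<subseteq> u ` {..<s}) \<and> (\<forall>s'<m. \<not> {1..n} \<subseteq> reset_collected y s')"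
  proof
    assume h: "\<forall>s<a + Suc m. \<not> {1..n} \<subseteq> reset_collected w s"
    show "(\<forall>s\<le>a. \<not> {1..n} \<subseteq> u ` {..<s}) \<and> (\<forall>s'<m. \<not> {1..n} \<subseteq> reset_collected y s')"
    proof (intro conjI allI impI)
      fix s assume "s \<le> a"
      then have "s < a + Suc m" by simp
      then show "\<not> {1..n} \<subseteq> u ` {..<s}" using h c1[OF \<open>s \<le> a\<close>] by metis
    next
      fix s' assume "s' < m" then show "\<not> {1..n} \<subseteq> reset_collected y s'" using h[rule_format, of "Suc (a + s')"] c2[of s'] by auto
    qed
  next
    assume h: "(\<forall>s\<le>a. \<not> {1..n} \<subseteq> u ` {..<s}) \<and> (\<forall>s'<m. \<not> {1..n} \<subseteq> reset_collected y s')"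
    show "\<forall>s<a + Suc m. \<not> {1..n} \<subseteq> reset_collected w s"
    proof (intro allI impI)
      fix s assume s: "s < a + Suc m"
      show "\<not> {1..n} \<subseteq> reset_collected w s"
      proof (cases "s \<le> a")
        case True then show ?thesis using h c1[of s] by auto
      next
        case False
        then have "s = Suc (a + (s - a - 1))" "s - a - 1 < m" using s by auto
        then show ?thesis using h c2[of "s - a - 1"] by metis
      qed
    qed
  qed
  have mono: "(\<forall>s\<le>a. \<not> {1..n} \<subseteq> u ` {..<s}) \<longleftrightarrow> \<not> {1..n} \<subseteq> u ` {..<a}"
  proof
    assume "\<not> {1..n} \<subseteq> u ` {..<a}"
    then show "\<forall>s\<le>a. \<not> {1..n} \<subseteq> u ` {..<s}"
      by (meson image_mono lessThan_subset_iff order_trans)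
  qed auto
  have "reset_collected w (a + Suc m) = reset_collected y m" using c2[of m] by simp
  then show ?thesis
    unfolding reset_first_complete_def w_def[symmetric] all mono by blast
qed

lemma gC_alt:
  "(\<Sum>u\<in>{..<a} \<rightarrow>\<^sub>E {0..n}. (\<Prod>i<a. (if u i = 0 then \<rho> else p (u i))) *
      (if \<forall>j<a. u j \<noteq> 0 then 1 else 0) * (if {1..n} \<subseteq> u ` {..<a} then 0 else 1)) = gC n p a"
proof -
  define U where "U u = (\<Prod>i<a. (if u i = 0 then \<rho> else p (u i))) *
      (if \<forall>j<a. u j \<noteq> (0::nat) then 1 else 0) * (if {1..n} \<subseteq> u ` {..<a} then 0 else (1::real))" for u
  have sub: "{..<a} \<rightarrow>\<^sub>E {1..n} \<subseteq> {..<a} \<rightarrow>\<^sub>E {0..n}" by (rule PiE_mono) auto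
  have z: "U w = 0" if "w \<in> ({..<a} \<rightarrow>\<^sub>E {0..n}) - ({..<a} \<rightarrow>\<^sub>E {1..n})" for w
  proof -
    from that have a: "w \<in> {..<a} \<rightarrow>\<^sub>E {0..n}" and b: "w \<notin> ({..<a} \<rightarrow>\<^sub>E {1..n})" by auto
    from b a obtain j where "j < a" "w j \<notin> {1..n}" unfolding PiE_iff by auto
    moreover have "w j \<in> {0..n}" using a \<open>j < a\<close> unfolding PiE_iff by auto
    ultimately have "\<not> (\<forall>j<a. w j \<noteq> 0)" by auto
    then have "(if \<forall>j<a. w j \<noteq> 0 then 1 else 0) = (0::real)" by (rule if_not_P)
    then show ?thesis unfolding U_def by simp
  qed
  have "sum U ({..<a} \<rightarrow>\<^sub>E {0..n}) = sum U ({..<a} \<rightarrow>\<^sub>E {1..n})"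
    by (rule sum.mono_neutral_right[OF _ sub]) (use z in \<open>auto intro: finite_PiE\<close>)
  also have "\<dots> = gC n p a" unfolding gC_def
  proof (rule sum.cong[OF refl])
    fix w assume w: "w \<in> {..<a} \<rightarrow>\<^sub>E {1..n}"
    then have nz: "\<forall>j<a. w j \<noteq> 0" unfolding PiE_iff by force
    have pr: "(\<Prod>i<a. (if w i = 0 then \<rho> else p (w i))) = (\<Prod>i<a. p (w i))"
      using nz by (intro prod.cong) auto
    have "(if \<forall>j<a. w j \<noteq> 0 then 1 else 0) = (1::real)" using nz by (rule if_P)
    then show "U w = (\<Prod>i<a. p (w i)) * (if {1..n} \<subseteq> w ` {..<a} then 0 else 1)"
      unfolding U_def pr by simp
  qed
  finally show ?thesis unfolding U_def .
qed

lemma partk: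
  assumes k: "k \<in> {1..t}"
  shows "(\<Sum>\<omega>\<in>{..<t} \<rightarrow>\<^sub>E {0..n}. ((\<Prod>i<t. (if \<omega> i = 0 then \<rho> else p (\<omega> i))) *
        (if reset_first_complete n \<omega> t then 1 else 0)) * (if \<omega> (k-1) = 0 \<and> (\<forall>j<k-1. \<omega> j \<noteq> 0) then 1 else 0))
   = \<rho> * gC n p (k-1) * T_prob n \<rho> p (t-k)"
proof -
  define a where "a = k - 1"
  define m where "m = t - k"
  have t: "t = a + Suc m" using k unfolding a_def m_def by auto
  define h where "h x = (if x = (0::nat) then \<rho> else p x)" for x
  define F where "F \<omega> = ((\<Prod>i<a + Suc m. h (\<omega> i)) *
        (if reset_first_complete n \<omega> (a + Suc m) then 1 else 0)) * (if \<omega> a = 0 \<and> (\<forall>j<a. \<omega> j \<noteq> 0) then 1 else (0::real))" for \<omega>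
  define U where "U u = (\<Prod>i<a. h (u i)) *
      (if \<forall>j<a. u j \<noteq> (0::nat) then 1 else 0) * (if {1..n} \<subseteq> u ` {..<a} then 0 else (1::real))" for u
  define V where "V y = (\<Prod>i<m. h (y i)) * (if reset_first_complete n y m then 1 else (0::real))" for y
  have key: "F (join a u (ncons x y)) = (if x = 0 then U u * (\<rho> * V y) else 0)" for u x y
  proof (cases "x = 0 \<and> (\<forall>j<a. u j \<noteq> 0)")
    case True
    then have x0: "x = 0" and nz: "\<forall>j<a. u j \<noteq> 0" by auto
    have "(\<Prod>i<a + Suc m. h (join a u (ncons x y) i)) =
          (\<Prod>i<a. h (join a u (ncons x y) i)) * (\<Prod>i<Suc m. h (join a u (ncons x y) (a + i)))"
      by (rule prod_lessThan_add)
    also have "(\<Prod>i<a. h (join a u (ncons x y) i)) = (\<Prod>i<a. h (u i))"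
      by (intro prod.cong) (auto simp: join_ncons_simps)
    also have "(\<Prod>i<Suc m. h (join a u (ncons x y) (a + i))) = h (join a u (ncons x y) a) * (\<Prod>i<m. h (join a u (ncons x y) (a + Suc i)))"
      using prod.lessThan_Suc_shift[of "\<lambda>i. h (join a u (ncons x y) (a + i))" m] by simp
    also have "(\<Prod>i<m. h (join a u (ncons x y) (a + Suc i))) = (\<Prod>i<m. h (y i))"
    proof (intro prod.cong refl)
      fix i show "h (join a u (ncons x y) (a + Suc i)) = h (y i)"
        using join_ncons_simps(3)[of a u x y i] by simp
    qed
    finally have pr: "(\<Prod>i<a + Suc m. h (join a u (ncons x y) i)) = (\<Prod>i<a. h (u i)) * (\<rho> * (\<Prod>i<m. h (y i)))"
      by (simp add: join_ncons_simps x0 h_def)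
    have rf: "reset_first_complete n (join a u (ncons x y)) (a + Suc m) \<longleftrightarrow>
         \<not> {1..n} \<subseteq> u ` {..<a} \<and> reset_first_complete n y m"
      using rfc_join[OF nz] x0 by simp
    have ind: "(if join a u (ncons x y) a = 0 \<and> (\<forall>j<a. join a u (ncons x y) j \<noteq> 0) then 1 else (0::real)) = 1"
      using x0 nz by (simp add: join_ncons_simps)
    show ?thesis unfolding F_def U_def V_def pr rf ind using x0 nz by simp
  next
    case False
    have ind: "(if join a u (ncons x y) a = 0 \<and> (\<forall>j<a. join a u (ncons x y) j \<noteq> 0) then 1 else (0::real)) = 0"
      using False by (simp add: join_ncons_simps)
    have "(if x = 0 then U u * (\<rho> * V y) else 0) = 0"
    proof (cases "x = 0")
      case True
      then have "\<not> (\<forall>j<a. u j \<noteq> 0)" using False by simp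
      then have "(if \<forall>j<a. u j \<noteq> 0 then 1 else 0) = (0::real)" by (rule if_not_P)
      then show ?thesis unfolding U_def by simp
    qed simp
    then show ?thesis unfolding F_def ind by simp
  qed
  have "(\<Sum>\<omega>\<in>{..<t} \<rightarrow>\<^sub>E {0..n}. ((\<Prod>i<t. (if \<omega> i = 0 then \<rho> else p (\<omega> i))) *
        (if reset_first_complete n \<omega> t then 1 else 0)) * (if \<omega> (k-1) = 0 \<and> (\<forall>j<k-1. \<omega> j \<noteq> 0) then 1 else 0))
     = (\<Sum>\<omega>\<in>{..<a + Suc m} \<rightarrow>\<^sub>E {0..n}. F \<omega>)"
    unfolding F_def h_def t a_def by simp
  also have "\<dots> = (\<Sum>u\<in>{..<a} \<rightarrow>\<^sub>E {0..n}. \<Sum>v\<in>{..<Suc m} \<rightarrow>\<^sub>E {0..n}. F (join a u v))"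
    by (rule sum_PiE_join) simp
  also have "\<dots> = (\<Sum>u\<in>{..<a} \<rightarrow>\<^sub>E {0..n}. \<Sum>x\<in>{0..n}. \<Sum>y\<in>{..<m} \<rightarrow>\<^sub>E {0..n}. F (join a u (ncons x y)))"
    by (intro sum.cong refl sum_PiE_cons) simp
  also have "\<dots> = (\<Sum>u\<in>{..<a} \<rightarrow>\<^sub>E {0..n}. \<Sum>x\<in>{0..n}. if x = 0 then (\<Sum>y\<in>{..<m} \<rightarrow>\<^sub>E {0..n}. U u * (\<rho> * V y)) else 0)"
    unfolding key by (intro sum.cong refl) simp
  also have "\<dots> = (\<Sum>u\<in>{..<a} \<rightarrow>\<^sub>E {0..n}. U u * (\<rho> * (\<Sum>y\<in>{..<m} \<rightarrow>\<^sub>E {0..n}. V y)))"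
    by (intro sum.cong refl) (simp add: sum_distrib_left)
  also have "\<dots> = (\<Sum>u\<in>{..<a} \<rightarrow>\<^sub>E {0..n}. U u) * \<rho> * (\<Sum>y\<in>{..<m} \<rightarrow>\<^sub>E {0..n}. V y)"
    by (simp add: sum_distrib_right sum_distrib_left[symmetric] mult_ac)
  also have "(\<Sum>u\<in>{..<a} \<rightarrow>\<^sub>E {0..n}. U u) = gC n p a"
    unfolding U_def h_def by (rule gC_alt)
  also have "(\<Sum>y\<in>{..<m} \<rightarrow>\<^sub>E {0..n}. V y) = T_prob n \<rho> p m"
    unfolding V_def h_def T_prob_def by simp
  finally show ?thesis unfolding a_def m_def by (simp add: mult_ac)
qed

lemma renewal:
  "T_prob n \<rho> p t = sC n p t + (\<Sum>k\<in>{1..t}. \<rho> * gC n p (k-1) * T_prob n \<rho> p (t-k))"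
proof -
  define G where "G \<omega> = ((\<Prod>i<t. (if \<omega> i = 0 then \<rho> else p (\<omega> i))) *
        (if reset_first_complete n \<omega> t then 1 else (0::real)))" for \<omega>
  have "T_prob n \<rho> p t = (\<Sum>\<omega>\<in>{..<t} \<rightarrow>\<^sub>E {0..n}. G \<omega> *
      ((if \<forall>j<t. \<omega> j \<noteq> 0 then 1 else 0) +
         (\<Sum>k\<in>{1..t}. (if \<omega> (k-1) = 0 \<and> (\<forall>j<k-1. \<omega> j \<noteq> 0) then 1 else 0))))"
    unfolding T_prob_def G_def indicator_first_zero by simp
  also have "\<dots> = (\<Sum>\<omega>\<in>{..<t} \<rightarrow>\<^sub>E {0..n}. G \<omega> * (if \<forall>j<t. \<omega> j \<noteq> 0 then 1 else 0)) +
      (\<Sum>\<omega>\<in>{..<t} \<rightarrow>\<^sub>E {0..n}. \<Sum>k\<in>{1..t}. G \<omega> * (if \<omega> (k-1) = 0 \<and> (\<forall>j<k-1. \<omega> j \<noteq> 0) then 1 else 0))"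
    by (simp only: distrib_left sum.distrib sum_distrib_left)
  also have "(\<Sum>\<omega>\<in>{..<t} \<rightarrow>\<^sub>E {0..n}. \<Sum>k\<in>{1..t}. G \<omega> * (if \<omega> (k-1) = 0 \<and> (\<forall>j<k-1. \<omega> j \<noteq> 0) then 1 else 0)) =
      (\<Sum>k\<in>{1..t}. \<Sum>\<omega>\<in>{..<t} \<rightarrow>\<^sub>E {0..n}. G \<omega> * (if \<omega> (k-1) = 0 \<and> (\<forall>j<k-1. \<omega> j \<noteq> 0) then 1 else 0))"
    by (rule sum.swap)
  also have "(\<Sum>\<omega>\<in>{..<t} \<rightarrow>\<^sub>E {0..n}. G \<omega> * (if \<forall>j<t. \<omega> j \<noteq> 0 then 1 else 0)) = sC n p t"
    unfolding G_def by (rule part0)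
  also have "(\<Sum>k\<in>{1..t}. \<Sum>\<omega>\<in>{..<t} \<rightarrow>\<^sub>E {0..n}. G \<omega> * (if \<omega> (k-1) = 0 \<and> (\<forall>j<k-1. \<omega> j \<noteq> 0) then 1 else 0))
      = (\<Sum>k\<in>{1..t}. \<rho> * gC n p (k-1) * T_prob n \<rho> p (t-k))"
    unfolding G_def by (intro sum.cong refl partk) simp
  finally show ?thesis .
qed

lemma fcC_Suc: "fcC n \<omega> (Suc m) \<longleftrightarrow> {1..n} \<subseteq> \<omega> ` {..<Suc m} \<and> \<not> {1..n} \<subseteq> \<omega> ` {..<m}"
proof -
  have "(\<forall>s<Suc m. \<not> {1..n} \<subseteq> \<omega> ` {..<s}) \<longleftrightarrow> \<not> {1..n} \<subseteq> \<omega> ` {..<m}"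
  proof
    assume h: "\<not> {1..n} \<subseteq> \<omega> ` {..<m}"
    show "\<forall>s<Suc m. \<not> {1..n} \<subseteq> \<omega> ` {..<s}"
    proof (intro allI impI)
      fix s assume "s < Suc m"
      then have "\<omega> ` {..<s} \<subseteq> \<omega> ` {..<m}" by (intro image_mono) auto
      then show "\<not> {1..n} \<subseteq> \<omega> ` {..<s}" using h by blast
    qed
  qed auto
  then show ?thesis unfolding fcC_def by blast
qed

end


context
  fixes n :: nat and \<rho> :: real and p :: "nat \<Rightarrow> real"
  assumes n1: "n \<ge> 1" and rpos: "0 < \<rho>" and ppos: "\<forall>i\<in>{1..n}. p i > 0"
begin

lemma gC_Suc: "gC n p (Suc m) + sC n p (Suc m) = (\<Sum>i=1..n. p i) * gC n p m"
proof -
  have "gC n p (Suc m) + sC n p (Suc m) = (\<Sum>\<omega>\<in>{..<Suc m} \<rightarrow>\<^sub>E {1..n}.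
      (\<Prod>i<Suc m. p (\<omega> i)) * (if {1..n} \<subseteq> \<omega> ` {..<m} then 0 else 1))"
    unfolding gC_def sC_def sum.distrib[symmetric]
  proof (intro sum.cong refl)
    fix w :: "nat \<Rightarrow> nat"
    have "(if {1..n} \<subseteq> w ` {..<Suc m} then 0 else 1) + (if fcC n w (Suc m) then 1 else 0) =
          (if {1..n} \<subseteq> w ` {..<m} then 0 else (1::real))"
    proof -
      have sub: "w ` {..<m} \<subseteq> w ` {..<Suc m}" by (intro image_mono) auto
      show ?thesis
      proof (cases "{1..n} \<subseteq> w ` {..<m}")
        case True
        then have "{1..n} \<subseteq> w ` {..<Suc m}" using sub by (rule order_trans)
        then show ?thesis unfolding fcC_Suc[OF n1 rpos ppos] using True by simp
      next
        case False
        then show ?thesis unfolding fcC_Suc[OF n1 rpos ppos] by simp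
      qed
    qed
    note eq = this
    show "(\<Prod>i<Suc m. p (w i)) * (if {1..n} \<subseteq> w ` {..<Suc m} then 0 else 1) +
         (\<Prod>i<Suc m. p (w i)) * (if fcC n w (Suc m) then 1 else 0) =
         (\<Prod>i<Suc m. p (w i)) * (if {1..n} \<subseteq> w ` {..<m} then 0 else 1)"
      unfolding distrib_left[symmetric] eq ..
  qed
  also have "\<dots> = (\<Sum>u\<in>{..<m} \<rightarrow>\<^sub>E {1..n}. \<Sum>x\<in>{1..n}.
      (\<Prod>i<Suc m. p ((u(m := x)) i)) * (if {1..n} \<subseteq> (u(m := x)) ` {..<m} then 0 else 1))"
    by (rule sum_PiE_snoc) simp
  also have "\<dots> = (\<Sum>u\<in>{..<m} \<rightarrow>\<^sub>E {1..n}. \<Sum>x\<in>{1..n}.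
      p x * ((\<Prod>i<m. p (u i)) * (if {1..n} \<subseteq> u ` {..<m} then 0 else 1)))"
  proof (intro sum.cong refl)
    fix u x
    have "(\<Prod>i<m. p ((u(m := x)) i)) = (\<Prod>i<m. p (u i))" by (intro prod.cong) auto
    then have pr: "(\<Prod>i<Suc m. p ((u(m := x)) i)) = p x * (\<Prod>i<m. p (u i))"
      by (simp only: prod.lessThan_Suc fun_upd_same mult.commute)
    have im: "(u(m := x)) ` {..<m} = u ` {..<m}" by (intro image_cong) auto
    show "(\<Prod>i<Suc m. p ((u(m := x)) i)) * (if {1..n} \<subseteq> (u(m := x)) ` {..<m} then 0 else 1) =
      p x * ((\<Prod>i<m. p (u i)) * (if {1..n} \<subseteq> u ` {..<m} then 0 else 1))"
      unfolding pr im by (rule mult.assoc)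
  qed
  also have "\<dots> = (\<Sum>i=1..n. p i) * gC n p m"
  proof -
    have "(\<Sum>u\<in>{..<m} \<rightarrow>\<^sub>E {1..n}. \<Sum>x\<in>{1..n}.
      p x * ((\<Prod>i<m. p (u i)) * (if {1..n} \<subseteq> u ` {..<m} then 0 else 1))) =
      (\<Sum>u\<in>{..<m} \<rightarrow>\<^sub>E {1..n}. (\<Sum>i=1..n. p i) * ((\<Prod>i<m. p (u i)) * (if {1..n} \<subseteq> u ` {..<m} then 0 else 1)))"
      by (intro sum.cong refl) (rule sum_distrib_right[symmetric])
    also have "\<dots> = (\<Sum>i=1..n. p i) * gC n p m"
      unfolding gC_def by (rule sum_distrib_left[symmetric])
    finally show ?thesis .
  qed
  finally show ?thesis .
qed

lemma gC_0: "gC n p 0 = 1" using n1 unfolding gC_def by simp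
lemma sC_0: "sC n p 0 = 0" using n1 unfolding sC_def fcC_def by simp

lemma prod_p_nonneg: "\<omega> \<in> {..<t} \<rightarrow>\<^sub>E {1..n} \<Longrightarrow> 0 \<le> (\<Prod>i<t. p (\<omega> i))"
  using ppos by (intro prod_nonneg) (auto simp: PiE_iff less_imp_le)

lemma gC_nonneg: "0 \<le> gC n p m"
  unfolding gC_def using prod_p_nonneg by (intro sum_nonneg) auto

lemma sC_nonneg: "0 \<le> sC n p m"
  unfolding sC_def using prod_p_nonneg by (intro sum_nonneg) auto

lemma gC_le: "gC n p m \<le> (\<Sum>i=1..n. p i) ^ m"
proof -
  have "gC n p m \<le> (\<Sum>\<omega>\<in>{..<m} \<rightarrow>\<^sub>E {1..n}. (\<Prod>i<m. p (\<omega> i)))"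
    unfolding gC_def using prod_p_nonneg by (intro sum_mono) auto
  also have "\<dots> = (\<Sum>i=1..n. p i) ^ m" by (rule sum_prod_PiE_pow) simp
  finally show ?thesis .
qed

lemma sC_le: "sC n p m \<le> (\<Sum>i=1..n. p i) ^ m"
proof -
  have "sC n p m \<le> (\<Sum>\<omega>\<in>{..<m} \<rightarrow>\<^sub>E {1..n}. (\<Prod>i<m. p (\<omega> i)))"
    unfolding sC_def using prod_p_nonneg by (intro sum_mono) auto
  also have "\<dots> = (\<Sum>i=1..n. p i) ^ m" by (rule sum_prod_PiE_pow) simp
  finally show ?thesis .
qed

lemma T_nonneg: "0 \<le> T_prob n \<rho> p t"
  unfolding T_prob_def using rpos ppos
  by (intro sum_nonneg mult_nonneg_nonneg prod_nonneg) (auto simp: PiE_iff less_imp_le)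

lemma sC_pos: "0 < sC n p n"
proof -
  define w where "w j = (if j < n then Suc j else undefined)" for j
  have w: "w \<in> {..<n} \<rightarrow>\<^sub>E {1..n}" by (auto simp: w_def PiE_iff extensional_def)
  have img: "w ` {..<s} = {1..s}" if "s \<le> n" for s
  proof
    show "w ` {..<s} \<subseteq> {1..s}" using that by (auto simp: w_def)
    show "{1..s} \<subseteq> w ` {..<s}"
    proof
      fix x assume x: "x \<in> {1..s}"
      then have "x = w (x - 1)" "x - 1 < s" using that by (auto simp: w_def)
      then show "x \<in> w ` {..<s}" by blast
    qed
  qed
  have "fcC n w n"
    unfolding fcC_def using img by auto
  moreover have "0 < (\<Prod>i<n. p (w i))"
    using ppos by (intro prod_pos) (auto simp: w_def)
  ultimately have "0 < (\<Prod>i<n. p (w i)) * (if fcC n w n then 1 else 0)" by simp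
  then show ?thesis unfolding sC_def
    using prod_p_nonneg w by (intro sum_pos2[OF _ w]) (auto intro: finite_PiE)
qed

end

lemma C_prob_sC:
  assumes "q \<noteq> 0"
  shows "C_prob n (\<lambda>i. p i / q) t = sC n p t / q ^ t"
  unfolding C_prob_def sC_def fcC_def
  by (simp add: prod_dividef sum_divide_distrib)



definition cseq :: "nat \<Rightarrow> real \<Rightarrow> (nat \<Rightarrow> real) \<Rightarrow> nat \<Rightarrow> real" where
  "cseq n \<rho> p t = C_prob n (\<lambda>i. p i / (1 - \<rho>)) t"
definition hseq :: "nat \<Rightarrow> real \<Rightarrow> (nat \<Rightarrow> real) \<Rightarrow> nat \<Rightarrow> real" where
  "hseq n \<rho> p m = gC n p m / (1 - \<rho>) ^ m"
definition Hf :: "nat \<Rightarrow> real \<Rightarrow> (nat \<Rightarrow> real) \<Rightarrow> 'a::{real_normed_field,banach} \<Rightarrow> 'a" where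
  "Hf n \<rho> p w = (\<Sum>m. of_real (hseq n \<rho> p m) * w ^ m)"

context
  fixes n :: nat and \<rho> :: real and p :: "nat \<Rightarrow> real" and q :: real
  assumes n1: "n \<ge> 1" and rpos: "0 < \<rho>" and rlt: "\<rho> < 1" and ppos: "\<forall>i\<in>{1..n}. p i > 0"
    and psum: "(\<Sum>i=1..n. p i) = 1 - \<rho>" and qdef: "q = 1 - \<rho>"
begin

lemmas renewal' = renewal[OF n1 rpos ppos]
lemmas gC_Suc' = gC_Suc[OF n1 rpos ppos]
lemmas gC_0' = gC_0[OF n1 rpos ppos]
lemmas sC_0' = sC_0[OF n1 rpos ppos]
lemmas gC_nonneg' = gC_nonneg[OF n1 rpos ppos]
lemmas sC_nonneg' = sC_nonneg[OF n1 rpos ppos]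
lemmas gC_le' = gC_le[OF n1 rpos ppos]
lemmas sC_le' = sC_le[OF n1 rpos ppos]
lemmas T_nonneg' = T_nonneg[OF n1 rpos ppos]
lemmas sC_pos' = sC_pos[OF n1 rpos ppos]

lemma q_pos: "0 < q" and q_lt1: "q < 1" and q_rho: "q + \<rho> = 1"
  using rpos rlt qdef by auto

lemma c_eq: "cseq n \<rho> p t = sC n p t / q ^ t"
  unfolding cseq_def qdef using q_pos qdef by (intro C_prob_sC) auto

lemma h_eq: "hseq n \<rho> p t = gC n p t / q ^ t"
  unfolding hseq_def qdef by simp

lemma c_bounds: "0 \<le> cseq n \<rho> p t" "cseq n \<rho> p t \<le> 1"
proof -
  show "0 \<le> cseq n \<rho> p t" unfolding c_eq using sC_nonneg' q_pos by simp
  have "sC n p t \<le> q ^ t" using sC_le'[of t] psum qdef by simp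
  then show "cseq n \<rho> p t \<le> 1" unfolding c_eq using q_pos by simp
qed

lemma h_bounds: "0 \<le> hseq n \<rho> p t" "hseq n \<rho> p t \<le> 1"
proof -
  show "0 \<le> hseq n \<rho> p t" unfolding h_eq using gC_nonneg' q_pos by simp
  have "gC n p t \<le> q ^ t" using gC_le'[of t] psum qdef by simp
  then show "hseq n \<rho> p t \<le> 1" unfolding h_eq using q_pos by simp
qed

lemma c_0: "cseq n \<rho> p 0 = 0" unfolding c_eq sC_0' by simp
lemma h_0: "hseq n \<rho> p 0 = 1" unfolding h_eq gC_0' by simp

lemma h_Suc: "hseq n \<rho> p (Suc m) = hseq n \<rho> p m - cseq n \<rho> p (Suc m)"
proof -
  have "gC n p (Suc m) = q * gC n p m - sC n p (Suc m)" using gC_Suc'[of m] psum qdef by simp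
  then show ?thesis unfolding h_eq c_eq using q_pos by (simp add: field_simps)
qed

lemma c_summable:
  fixes w :: "'a::{real_normed_field,banach}"
  assumes "norm w < 1"
  shows "summable (\<lambda>t. norm (of_real (cseq n \<rho> p t) * w ^ t))" "summable (\<lambda>t. of_real (cseq n \<rho> p t) * w ^ t)"
proof -
  have b: "norm (of_real (cseq n \<rho> p t) * w ^ t) \<le> norm w ^ t" for t
    using c_bounds[of t] by (simp add: norm_mult norm_power mult_left_le_one_le)
  have g: "summable (\<lambda>t. norm w ^ t)" using assms by (intro summable_geometric) simp
  show "summable (\<lambda>t. norm (of_real (cseq n \<rho> p t) * w ^ t))"
    by (rule summable_comparison_test[OF _ g]) (use b in auto)
  then show "summable (\<lambda>t. of_real (cseq n \<rho> p t) * w ^ t)" by (rule summable_norm_cancel)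
qed

lemma h_summable:
  fixes w :: "'a::{real_normed_field,banach}"
  assumes "norm w < 1"
  shows "summable (\<lambda>t. norm (of_real (hseq n \<rho> p t) * w ^ t))" "summable (\<lambda>t. of_real (hseq n \<rho> p t) * w ^ t)"
proof -
  have b: "norm (of_real (hseq n \<rho> p t) * w ^ t) \<le> norm w ^ t" for t
    using h_bounds[of t] by (simp add: norm_mult norm_power mult_left_le_one_le)
  have g: "summable (\<lambda>t. norm w ^ t)" using assms by (intro summable_geometric) simp
  show "summable (\<lambda>t. norm (of_real (hseq n \<rho> p t) * w ^ t))"
    by (rule summable_comparison_test[OF _ g]) (use b in auto)
  then show "summable (\<lambda>t. of_real (hseq n \<rho> p t) * w ^ t)" by (rule summable_norm_cancel)
qed

lemma H_identity:
  fixes w :: "'a::{real_normed_field,banach}"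
  assumes w: "norm w < 1"
  shows "(1 - w) * Hf n \<rho> p w = 1 - C_pgf n (\<lambda>i. p i / (1 - \<rho>)) w"
proof -
  define d where "d m = of_real (hseq n \<rho> p m) * w ^ m" for m
  define H where "H = Hf n \<rho> p w"
  have dH: "d sums H" unfolding d_def H_def Hf_def using h_summable(2)[OF w] by (rule summable_sums)
  have cs: "(\<lambda>t. of_real (cseq n \<rho> p t) * w ^ t) sums C_pgf n (\<lambda>i. p i / (1 - \<rho>)) w"
    unfolding C_pgf_def cseq_def[symmetric] using c_summable(2)[OF w] by (rule summable_sums)
  then have cs': "(\<lambda>m. of_real (cseq n \<rho> p (Suc m)) * w ^ Suc m) sums C_pgf n (\<lambda>i. p i / (1 - \<rho>)) w"
    using sums_Suc_iff[of "\<lambda>t. of_real (cseq n \<rho> p t) * w ^ t"] c_0 by simp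
  have d1: "(\<lambda>m. d m * w) sums (H * w)" using dH by (rule sums_mult2)
  have d2: "(\<lambda>m. d (Suc m)) sums (H - d 0)" using dH sums_Suc_iff[of d "H - d 0"] by simp
  have "(\<lambda>m. d m * w - d (Suc m)) sums (H * w - (H - d 0))" using d1 d2 by (rule sums_diff)
  moreover have "d m * w - d (Suc m) = of_real (cseq n \<rho> p (Suc m)) * w ^ Suc m" for m
    unfolding d_def h_Suc by (simp add: algebra_simps)
  ultimately have "(\<lambda>m. of_real (cseq n \<rho> p (Suc m)) * w ^ Suc m) sums (H * w - (H - d 0))" by simp
  then have "C_pgf n (\<lambda>i. p i / (1 - \<rho>)) w = H * w - (H - d 0)" using cs' by (rule sums_unique2[symmetric])
  moreover have "d 0 = 1" unfolding d_def h_0 by simp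
  ultimately show ?thesis unfolding H_def[symmetric] by (simp add: algebra_simps)
qed


lemma main_generic:
  fixes z :: "'a::{real_normed_field,banach}" and r :: real
  assumes r0: "0 \<le> r" and zr: "norm z \<le> r" and qr: "q * r < 1"
    and Fr: "\<rho> * r * Hf n \<rho> p (q * r) < 1"
  shows "1 - of_real \<rho> * z * Hf n \<rho> p (of_real q * z) \<noteq> 0"
    and "(\<lambda>t. of_real (T_prob n \<rho> p t) * z ^ t) sums
           (C_pgf n (\<lambda>i. p i / (1 - \<rho>)) (of_real q * z) / (1 - of_real \<rho> * z * Hf n \<rho> p (of_real q * z)))"
proof -
  define a where "a t = T_prob n \<rho> p t" for t
  define s where "s t = sC n p t" for t
  define f where "f k = (if k = 0 then 0 else \<rho> * gC n p (k - 1))" for k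
  have a0: "0 \<le> a t" for t unfolding a_def by (rule T_nonneg')
  have s0: "0 \<le> s t" for t unfolding s_def by (rule sC_nonneg')
  have f0: "0 \<le> f t" for t unfolding f_def using gC_nonneg' rpos by simp
  have ren: "a t = s t + (\<Sum>k\<le>t. f k * a (t - k))" for t
  proof -
    have "(\<Sum>k\<le>t. f k * a (t - k)) = (\<Sum>k\<in>{1..t}. f k * a (t - k))"
      by (rule sum.mono_neutral_right) (auto simp: f_def)
    also have "\<dots> = (\<Sum>k\<in>{1..t}. \<rho> * gC n p (k-1) * T_prob n \<rho> p (t-k))"
      by (rule sum.cong) (auto simp: f_def a_def)
    finally show ?thesis unfolding a_def s_def using renewal'[of t] by simp
  qed
  have qr0: "0 \<le> q * r" using q_pos r0 by simp
  have nqr: "norm (q * r) < 1" using qr qr0 by simp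
  have s_r: "s t * r ^ t = cseq n \<rho> p t * (q * r) ^ t" for t
    unfolding s_def c_eq using q_pos by (simp add: power_mult_distrib)
  have f_r: "f (Suc m) * r ^ Suc m = \<rho> * r * (hseq n \<rho> p m * (q * r) ^ m)" for m
    unfolding f_def h_eq using q_pos by (simp add: power_mult_distrib)
  have Ssum: "summable (\<lambda>t. s t * r ^ t)"
    unfolding s_r using c_summable(2)[OF nqr] by simp
  define Sr where "Sr = (\<Sum>t. s t * r ^ t)"
  define Hr where "Hr = Hf n \<rho> p (q * r)"
  have Hr_sums: "(\<lambda>m. hseq n \<rho> p m * (q * r) ^ m) sums Hr"
    unfolding Hr_def Hf_def using h_summable(2)[OF nqr] by (simp add: summable_sums)
  have Fsums: "(\<lambda>k. f k * r ^ k) sums (\<rho> * r * Hr)"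
  proof -
    have "(\<lambda>m. \<rho> * r * (hseq n \<rho> p m * (q * r) ^ m)) sums (\<rho> * r * Hr)"
      using Hr_sums by (rule sums_mult)
    then have "(\<lambda>m. f (Suc m) * r ^ Suc m) sums (\<rho> * r * Hr)" unfolding f_r .
    then show ?thesis using sums_Suc_iff[of "\<lambda>k. f k * r ^ k"] by (simp add: f_def)
  qed
  have Fr': "\<rho> * r * Hr < 1" using Fr unfolding Hr_def .
  have fr0: "0 \<le> f k * r ^ k" for k using f0 r0 by simp
  have sr0: "0 \<le> s k * r ^ k" for k using s0 r0 by simp
  have ar0: "0 \<le> a k * r ^ k" for k using a0 r0 by simp
  have bound: "(\<Sum>t\<le>N. a t * r ^ t) \<le> Sr / (1 - \<rho> * r * Hr)" for N
  proof -
    define P where "P = (\<Sum>t\<le>N. a t * r ^ t)"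
    have P0: "0 \<le> P" unfolding P_def using ar0 by (intro sum_nonneg) auto
    have Psplit: "P = (\<Sum>t\<le>N. s t * r ^ t) + (\<Sum>t\<le>N. \<Sum>k\<le>t. (f k * r ^ k) * (a (t - k) * r ^ (t - k)))"
    proof -
      have pt: "a t * r ^ t = s t * r ^ t + (\<Sum>k\<le>t. (f k * r ^ k) * (a (t - k) * r ^ (t - k)))" for t
      proof -
        have c: "(\<Sum>k\<le>t. (f k * r ^ k) * (a (t - k) * r ^ (t - k))) = (\<Sum>k\<le>t. f k * a (t - k) * r ^ t)"
        proof (rule sum.cong[OF refl])
          fix k assume "k \<in> {..t}"
          then have e: "r ^ k * r ^ (t - k) = r ^ t" by (simp add: power_add[symmetric])
          have "(f k * r ^ k) * (a (t - k) * r ^ (t - k)) = f k * a (t - k) * (r ^ k * r ^ (t - k))"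
            by (simp only: mult_ac)
          then show "(f k * r ^ k) * (a (t - k) * r ^ (t - k)) = f k * a (t - k) * r ^ t"
            by (simp only: e)
        qed
        have e1: "a t * r ^ t = (s t + (\<Sum>k\<le>t. f k * a (t - k))) * r ^ t"
          by (simp only: ren[of t, symmetric])
        also have "\<dots> = s t * r ^ t + (\<Sum>k\<le>t. f k * a (t - k) * r ^ t)"
          by (simp only: distrib_right sum_distrib_right)
        finally show ?thesis by (simp only: c)
      qed
      show ?thesis unfolding P_def sum.distrib[symmetric] by (intro sum.cong refl pt)
    qed
    have SN: "(\<Sum>t\<le>N. s t * r ^ t) \<le> Sr"
      unfolding Sr_def using Ssum sr0 by (intro sum_le_suminf) auto
    have "(\<Sum>t\<le>N. \<Sum>k\<le>t. (f k * r ^ k) * (a (t - k) * r ^ (t - k))) =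
               (\<Sum>(i,j)\<in>{(i,j). i + j \<le> N}. (f i * r ^ i) * (a j * r ^ j))"
      by (rule sum.triangle_reindex_eq[symmetric])
    also have "\<dots> \<le> (\<Sum>(i,j)\<in>{..N} \<times> {..N}. (f i * r ^ i) * (a j * r ^ j))"
      by (rule sum_mono2) (use fr0 ar0 in \<open>auto intro: mult_nonneg_nonneg\<close>)
    also have "\<dots> = (\<Sum>i\<le>N. f i * r ^ i) * P"
      unfolding P_def by (simp add: sum_product sum.cartesian_product)
    finally have TN: "(\<Sum>t\<le>N. \<Sum>k\<le>t. (f k * r ^ k) * (a (t - k) * r ^ (t - k))) \<le> (\<Sum>i\<le>N. f i * r ^ i) * P" .
    have "(\<Sum>i\<le>N. f i * r ^ i) \<le> (\<Sum>k. f k * r ^ k)"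
      using sums_summable[OF Fsums] fr0 by (intro sum_le_suminf) auto
    also have "(\<Sum>k. f k * r ^ k) = \<rho> * r * Hr" using Fsums by (rule sums_unique[symmetric])
    finally have "(\<Sum>i\<le>N. f i * r ^ i) * P \<le> \<rho> * r * Hr * P" using P0 by (rule mult_right_mono)
    then have "P \<le> Sr + \<rho> * r * Hr * P" using Psplit SN TN by linarith
    then have "P * (1 - \<rho> * r * Hr) \<le> Sr" by (simp add: algebra_simps)
    then show ?thesis unfolding P_def[symmetric] using Fr' by (simp add: field_simps)
  qed
  have Asum: "summable (\<lambda>t. a t * r ^ t)"
    by (rule bounded_imp_summable[OF ar0 bound])
  define A' where "A' t = of_real (a t) * z ^ t" for t
  define S' where "S' t = of_real (s t) * z ^ t" for t
  define F' where "F' t = of_real (f t) * z ^ t" for t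
  have nz: "norm z ^ t \<le> r ^ t" for t using zr by (intro power_mono) auto
  have A'n: "norm (A' t) \<le> a t * r ^ t" for t
    unfolding A'_def using a0 nz by (simp add: norm_mult norm_power mult_left_mono)
  have S'n: "norm (S' t) \<le> s t * r ^ t" for t
    unfolding S'_def using s0 nz by (simp add: norm_mult norm_power mult_left_mono)
  have F'n: "norm (F' t) \<le> f t * r ^ t" for t
    unfolding F'_def using f0 nz by (simp add: norm_mult norm_power mult_left_mono)
  have A'sum: "summable (\<lambda>t. norm (A' t))"
    by (rule summable_comparison_test[OF _ Asum]) (use A'n in auto)
  have S'sum: "summable (\<lambda>t. norm (S' t))"
    by (rule summable_comparison_test[OF _ Ssum]) (use S'n in auto)
  have F'sum: "summable (\<lambda>t. norm (F' t))"
    by (rule summable_comparison_test[OF _ sums_summable[OF Fsums]]) (use F'n in auto)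
  define X where "X = suminf A'"
  define S where "S = suminf S'"
  define F where "F = suminf F'"
  have cauchy: "(\<lambda>t. \<Sum>k\<le>t. F' k * A' (t - k)) sums (F * X)"
    unfolding F_def X_def by (rule Cauchy_product_sums[OF F'sum A'sum])
  have A'eq: "A' t = S' t + (\<Sum>k\<le>t. F' k * A' (t - k))" for t
  proof -
    have "(\<Sum>k\<le>t. F' k * A' (t - k)) = (\<Sum>k\<le>t. of_real (f k * a (t - k)) * z ^ t)"
    proof (rule sum.cong[OF refl])
      fix k assume "k \<in> {..t}"
      then have e: "z ^ t = z ^ k * z ^ (t - k)" by (simp add: power_add[symmetric])
      show "F' k * A' (t - k) = of_real (f k * a (t - k)) * z ^ t"
        unfolding F'_def A'_def e of_real_mult by (simp only: mult_ac)
    qed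
    also have "\<dots> = of_real (\<Sum>k\<le>t. f k * a (t - k)) * z ^ t"
      by (simp add: sum_distrib_right)
    finally have e: "(\<Sum>k\<le>t. F' k * A' (t - k)) = of_real (\<Sum>k\<le>t. f k * a (t - k)) * z ^ t" .
    show ?thesis unfolding e unfolding A'_def S'_def
      by (subst ren[of t]) (simp only: of_real_add distrib_right)
  qed
  have "A' sums (S + F * X)"
  proof -
    have "(\<lambda>t. S' t + (\<Sum>k\<le>t. F' k * A' (t - k))) sums (S + F * X)"
      using summable_sums[OF summable_norm_cancel[OF S'sum]] cauchy unfolding S_def by (rule sums_add)
    moreover have "(\<lambda>t. S' t + (\<Sum>k\<le>t. F' k * A' (t - k))) = A'"
      by (rule ext) (rule A'eq[symmetric])
    ultimately show ?thesis by simp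
  qed
  then have XSF: "X = S + F * X" unfolding X_def by (rule sums_unique[symmetric])
  have S_eq: "S = C_pgf n (\<lambda>i. p i / (1 - \<rho>)) (of_real q * z)"
    unfolding S_def C_pgf_def
  proof (rule arg_cong[where f=suminf], rule ext)
    fix t
    show "S' t = of_real (C_prob n (\<lambda>i. p i / (1 - \<rho>)) t) * (of_real q * z) ^ t"
      unfolding S'_def s_def cseq_def[symmetric] c_eq using q_pos
      by (simp add: power_mult_distrib)
  qed
  have nqz: "norm (of_real q * z :: 'a) < 1"
  proof -
    have "norm (of_real q * z :: 'a) = q * norm z" using q_pos by (simp add: norm_mult)
    also have "\<dots> \<le> q * r" using zr q_pos by simp
    finally show ?thesis using qr by simp
  qed
  have F_eq: "F = of_real \<rho> * z * Hf n \<rho> p (of_real q * z)"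
  proof -
    have "(\<lambda>m. of_real (hseq n \<rho> p m) * (of_real q * z) ^ m) sums Hf n \<rho> p (of_real q * z)"
      unfolding Hf_def using h_summable(2)[OF nqz] by (rule summable_sums)
    then have "(\<lambda>m. of_real \<rho> * z * (of_real (hseq n \<rho> p m) * (of_real q * z) ^ m)) sums
               (of_real \<rho> * z * Hf n \<rho> p (of_real q * z))" by (rule sums_mult)
    moreover have "F' (Suc m) = of_real \<rho> * z * (of_real (hseq n \<rho> p m) * (of_real q * z) ^ m)" for m
      unfolding F'_def f_def h_eq using q_pos by (simp add: power_mult_distrib field_simps)
    ultimately have "(\<lambda>m. F' (Suc m)) sums (of_real \<rho> * z * Hf n \<rho> p (of_real q * z))" by simp
    then have "F' sums (of_real \<rho> * z * Hf n \<rho> p (of_real q * z))"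
      using sums_Suc_iff[of F'] by (simp add: F'_def f_def)
    then show ?thesis unfolding F_def by (rule sums_unique[symmetric])
  qed
  have Fn: "norm F < 1"
  proof -
    have "norm F \<le> (\<Sum>t. norm (F' t))" unfolding F_def by (rule summable_norm[OF F'sum])
    also have "\<dots> \<le> (\<Sum>t. f t * r ^ t)"
      by (rule suminf_le[OF F'n F'sum sums_summable[OF Fsums]])
    also have "\<dots> = \<rho> * r * Hr" using Fsums by (rule sums_unique[symmetric])
    finally show ?thesis using Fr' by simp
  qed
  have F1: "1 - F \<noteq> 0"
  proof
    assume "1 - F = 0"
    then have "F = 1" by simp
    then show False using Fn by simp
  qed
  then show "1 - of_real \<rho> * z * Hf n \<rho> p (of_real q * z) \<noteq> 0" unfolding F_eq .
  have "X = S / (1 - F)" using XSF F1 by (simp add: field_simps)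
  moreover have "A' sums X" unfolding X_def using summable_norm_cancel[OF A'sum] by (rule summable_sums)
  ultimately have "A' sums (S / (1 - F))" by simp
  then show "(\<lambda>t. of_real (T_prob n \<rho> p t) * z ^ t) sums
           (C_pgf n (\<lambda>i. p i / (1 - \<rho>)) (of_real q * z) / (1 - of_real \<rho> * z * Hf n \<rho> p (of_real q * z)))"
    unfolding A'_def a_def S_eq F_eq .
qed


lemma Phi_q_pos: "0 < C_pgf n (\<lambda>i. p i / (1 - \<rho>)) q"
proof -
  have nq: "norm q < 1" using q_pos q_lt1 by simp
  have sm: "summable (\<lambda>t. cseq n \<rho> p t * q ^ t)" using c_summable(2)[OF nq] by simp
  have "C_pgf n (\<lambda>i. p i / (1 - \<rho>)) q = (\<Sum>t. cseq n \<rho> p t * q ^ t)"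
    unfolding C_pgf_def cseq_def by simp
  also have "\<dots> > 0"
  proof (rule suminf_pos2[OF sm])
    show "0 \<le> cseq n \<rho> p t * q ^ t" for t using c_bounds(1)[of t] q_pos by simp
    show "0 < cseq n \<rho> p n * q ^ n" unfolding c_eq using sC_pos' q_pos by simp
  qed
  finally show ?thesis .
qed

lemma complex_case:
  fixes z :: complex
  assumes z: "norm z \<le> 1"
  shows "(\<lambda>t. of_real (T_prob n \<rho> p t) * z ^ t) sums
             ((1 - of_real q * z) * C_pgf n (\<lambda>i. p i / (1 - \<rho>)) (of_real q * z) /
              (1 - z + of_real \<rho> * z * C_pgf n (\<lambda>i. p i / (1 - \<rho>)) (of_real q * z)))"
proof -
  have nq: "norm q < 1" using q_pos q_lt1 by simp
  have "(1 - q) * Hf n \<rho> p q = 1 - C_pgf n (\<lambda>i. p i / (1 - \<rho>)) q" by (rule H_identity[OF nq])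
  then have "\<rho> * Hf n \<rho> p q = 1 - C_pgf n (\<lambda>i. p i / (1 - \<rho>)) q" using qdef by simp
  then have Fr: "\<rho> * 1 * Hf n \<rho> p (q * 1) < 1" using Phi_q_pos by simp
  define w where "w = (of_real q * z :: complex)"
  define Phi where "Phi = C_pgf n (\<lambda>i. p i / (1 - \<rho>)) w"
  define H where "H = Hf n \<rho> p w"
  have nw: "norm w < 1"
  proof -
    have "norm w = q * norm z" unfolding w_def using q_pos by (simp add: norm_mult)
    also have "\<dots> \<le> q" using z q_pos by (simp add: mult_left_le_one_le)
    finally show ?thesis using q_lt1 by simp
  qed
  have w1: "1 - w \<noteq> 0" using nw by auto
  have HI: "(1 - w) * H = 1 - Phi" unfolding H_def Phi_def by (rule H_identity[OF nw])
  have D: "1 - of_real \<rho> * z * H \<noteq> 0"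
    unfolding H_def w_def by (rule main_generic(1)[of 1]) (use z q_lt1 Fr in auto)
  have S: "(\<lambda>t. of_real (T_prob n \<rho> p t) * z ^ t) sums (Phi / (1 - of_real \<rho> * z * H))"
    unfolding H_def w_def Phi_def by (rule main_generic(2)[of 1]) (use z q_lt1 Fr in auto)
  have wz: "w + of_real \<rho> * z = z"
  proof -
    have "w + of_real \<rho> * z = of_real (q + \<rho>) * z" unfolding w_def by (simp add: distrib_right)
    then show ?thesis using q_rho by simp
  qed
  have den: "1 - z + of_real \<rho> * z * Phi = (1 - w) * (1 - of_real \<rho> * z * H)"
  proof -
    have "(1 - w) * (1 - of_real \<rho> * z * H) = 1 - w - of_real \<rho> * z * ((1 - w) * H)"
      by (simp add: algebra_simps)
    also have "\<dots> = 1 - (w + of_real \<rho> * z) + of_real \<rho> * z * Phi" unfolding HI by (simp add: algebra_simps)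
    finally show ?thesis unfolding wz by simp
  qed
  have "Phi / (1 - of_real \<rho> * z * H) = (1 - w) * Phi / (1 - z + of_real \<rho> * z * Phi)"
    unfolding den using w1 by (rule mult_divide_mult_cancel_left[symmetric])
  then show ?thesis using S unfolding Phi_def w_def by simp
qed

lemma real_case:
  fixes z :: real
  assumes z0: "0 \<le> z" and qz: "q * z < 1"
    and pos: "1 - z + \<rho> * z * C_pgf n (\<lambda>i. p i / (1 - \<rho>)) (q * z) > 0"
  shows "(\<lambda>t. T_prob n \<rho> p t * z ^ t) sums
             ((1 - q * z) * C_pgf n (\<lambda>i. p i / (1 - \<rho>)) (q * z) /
              (1 - z + \<rho> * z * C_pgf n (\<lambda>i. p i / (1 - \<rho>)) (q * z)))"
proof -
  define w where "w = q * z"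
  define Phi where "Phi = C_pgf n (\<lambda>i. p i / (1 - \<rho>)) w"
  define H where "H = Hf n \<rho> p w"
  have w0: "0 \<le> w" unfolding w_def using q_pos z0 by simp
  have nw: "norm w < 1" using w0 qz unfolding w_def by simp
  have HI: "(1 - w) * H = 1 - Phi" unfolding H_def Phi_def by (rule H_identity[OF nw])
  have wz: "w + \<rho> * z = z" unfolding w_def using q_rho by (metis distrib_right mult_1)
  have den: "1 - z + \<rho> * z * Phi = (1 - w) * (1 - \<rho> * z * H)"
  proof -
    have "(1 - w) * (1 - \<rho> * z * H) = 1 - w - \<rho> * z * ((1 - w) * H)"
      by (simp add: algebra_simps)
    also have "\<dots> = 1 - (w + \<rho> * z) + \<rho> * z * Phi" unfolding HI by (simp add: algebra_simps)
    finally show ?thesis unfolding wz by simp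
  qed
  have w1: "0 < 1 - w" using qz unfolding w_def by simp
  have "0 < (1 - w) * (1 - \<rho> * z * H)" using pos den unfolding Phi_def w_def by simp
  then have D: "0 < 1 - \<rho> * z * H" using w1 by (simp add: zero_less_mult_iff)
  then have Fr: "\<rho> * z * Hf n \<rho> p (q * z) < 1" unfolding H_def w_def by simp
  have S: "(\<lambda>t. of_real (T_prob n \<rho> p t) * z ^ t) sums
      (C_pgf n (\<lambda>i. p i / (1 - \<rho>)) (of_real q * z) / (1 - of_real \<rho> * z * Hf n \<rho> p (of_real q * z)))"
    by (rule main_generic(2)[OF z0 _ qz Fr]) (use z0 in simp)
  then have S': "(\<lambda>t. T_prob n \<rho> p t * z ^ t) sums (Phi / (1 - \<rho> * z * H))"
    unfolding Phi_def H_def w_def by simp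
  have "Phi / (1 - \<rho> * z * H) = (1 - w) * Phi / (1 - z + \<rho> * z * Phi)"
    unfolding den using w1 by (intro mult_divide_mult_cancel_left[symmetric]) simp
  then show ?thesis using S' unfolding Phi_def w_def by simp
qed

end

theorem mainTheorem9:
  fixes n :: nat and \<rho> :: real and p :: "nat \<Rightarrow> real"
  assumes "n \<ge> 1" and "0 < \<rho>" and "\<rho> < 1"
    and "\<forall>i\<in>{1..n}. p i > 0"
    and "(\<Sum>i=1..n. p i) = 1 - \<rho>"
  shows "(\<forall>z::complex. norm z \<le> 1 \<longrightarrow>
           (\<lambda>t. of_real (T_prob n \<rho> p t) * z ^ t) sums
             ((1 - of_real (1 - \<rho>) * z) * C_pgf n (\<lambda>i. p i / (1 - \<rho>)) (of_real (1 - \<rho>) * z) /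
              (1 - z + of_real \<rho> * z * C_pgf n (\<lambda>i. p i / (1 - \<rho>)) (of_real (1 - \<rho>) * z))))
       \<and> (\<forall>z::real. 0 \<le> z \<and> (1 - \<rho>) * z < 1 \<and>
             1 - z + \<rho> * z * C_pgf n (\<lambda>i. p i / (1 - \<rho>)) ((1 - \<rho>) * z) > 0 \<longrightarrow>
           (\<lambda>t. T_prob n \<rho> p t * z ^ t) sums
             ((1 - (1 - \<rho>) * z) * C_pgf n (\<lambda>i. p i / (1 - \<rho>)) ((1 - \<rho>) * z) /
              (1 - z + \<rho> * z * C_pgf n (\<lambda>i. p i / (1 - \<rho>)) ((1 - \<rho>) * z))))"
  using complex_case[OF assms refl] real_case[OF assms refl] by blast


end
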